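(* Let $G$ be the $n\times n$ real matrix with entries $G_{ij}=\frac1p\,\sigma^{\,i+j}(x)$ for $0\le i,j\le n-1$ (exponents of $\sigma$ may be read modulo $n$, since $\sigma^n(x)=x$). Then $G$ is orthogonal: $GG^T=G^TG=I_n$.
   Context: Let $n>1$ be an odd integer and $p$ a prime with $p\equiv 1 \pmod n$. Let $\zeta_p=e^{2\pi i/p}$, let $r$ be a primitive root modulo $p$, and let $\sigma$ be the automorphism of $\mathbb{Q}(\zeta_p)$ with $\sigma(\zeta_p)=\zeta_p^r$. Let $\mathbb{K}=\{y\in\mathbb{Q}(\zeta_p):\sigma^n(y)=y\}$; it is a totally real field of degree $n$, contained in $\mathbb{R}$ via $\mathbb{Q}(\zeta_p)\subset\mathbb{C}$, and its embeddings into $\mathbb{R}$ are the restrictions of $\sigma^0,\dots,\sigma^{n-1}$. Let $\alpha=\prod_{j=0}^{(p-3)/2}(1-\zeta_p^{r^j})$, let $\lambda$ be an integer with $\lambda(r-1)\equiv1\pmod p$, let $z=\zeta_p^{\lambda}\alpha(1-\zeta_p)$, and let $x=\mathrm{Tr}_{\mathbb{Q}(\zeta_p)/\mathbb{K}}(z)=\sum_{j=1}^{(p-1)/n}\sigma^{jn}(z)\in\mathcal{O}_\mathbb{K}$. *)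

theory Defs
  imports "HOL-Analysis.Analysis" "HOL-Number_Theory.Number_Theory"
begin

definition zeta :: "nat \<Rightarrow> complex" where
  "zeta p = cis (2 * pi / real p)"

text \<open>The element z = zeta^lambda * alpha * (1 - zeta) written as a rational expression
  in an argument w (substituted for zeta), so that the automorphism sigma^k, which sends
  zeta to zeta^(r^k), acts by substituting w := zeta^(r^k).\<close>
definition z_expr :: "nat \<Rightarrow> nat \<Rightarrow> int \<Rightarrow> complex \<Rightarrow> complex" where
  "z_expr p r lam w =
     w powi lam * (\<Prod>j\<in>{0..(p - 3) div 2}. (1 - w ^ (r ^ j))) * (1 - w)"

definition sigma_z :: "nat \<Rightarrow> nat \<Rightarrow> int \<Rightarrow> nat \<Rightarrow> complex" where
  "sigma_z p r lam k = z_expr p r lam (zeta p ^ (r ^ k))"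

definition sigma_x :: "nat \<Rightarrow> nat \<Rightarrow> nat \<Rightarrow> int \<Rightarrow> nat \<Rightarrow> complex" where
  "sigma_x n p r lam k = (\<Sum>j=1..(p - 1) div n. sigma_z p r lam (j * n + k))"

definition Gmat :: "nat \<Rightarrow> nat \<Rightarrow> nat \<Rightarrow> int \<Rightarrow> nat \<Rightarrow> nat \<Rightarrow> complex" where
  "Gmat n p r lam i j = sigma_x n p r lam (i + j) / of_nat p"

end

theory Submission imports Defs "HOL-Computational_Algebra.Polynomial" begin

lemma zeta_pow: "p > 0 \<Longrightarrow> zeta p ^ a = exp(2 * of_real pi * \<i> * of_nat a / of_nat p)"
proof -
  have "zeta p ^ a = cis (real a * (2*pi/real p))" unfolding zeta_def by (rule Complex.DeMoivre)
  also have "\<dots> = exp(2 * of_real pi * \<i> * of_nat a / of_nat p)"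
    by (simp add: cis_conv_exp field_simps)
  finally show ?thesis .
qed

lemma zeta_pow_eq_1: "p > 0 \<Longrightarrow> zeta p ^ a = 1 \<longleftrightarrow> p dvd a"
  using complex_root_unity_eq_1[of p a] by (simp add: zeta_pow)

lemma zeta_p: "p > 0 \<Longrightarrow> zeta p ^ p = 1"
  by (simp add: zeta_pow_eq_1)

lemma zeta_nz: "zeta p \<noteq> 0"
  unfolding zeta_def by simp

lemma root_pow_mod: assumes "(w::complex) ^ p = 1" shows "w ^ a = w ^ (a mod p)"
proof -
  have "w ^ a = w ^ (p * (a div p) + a mod p)" by simp
  also have "\<dots> = (w^p)^(a div p) * w ^ (a mod p)" by (simp only: power_add power_mult)
  finally show ?thesis using assms by simp
qed

lemma zeta_cong: "p > 0 \<Longrightarrow> [a = b] (mod p) \<Longrightarrow> zeta p ^ a = zeta p ^ b"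
  using root_pow_mod[OF zeta_p] unfolding cong_def by metis

lemma root_powi: assumes "(w::complex) ^ p = 1" "p > 0" 
  shows "w powi l = w ^ (nat (l mod int p))"
proof -
  have w0: "w \<noteq> 0"
  proof
    assume "w = 0" then show False using assms by (simp add: power_0_left)
  qed
  have "w powi l = w powi (int p * (l div int p) + l mod int p)" by simp
  also have "\<dots> = w powi (int p * (l div int p)) * w powi (l mod int p)"
    using w0 by (intro power_int_add) simp
  also have "w powi (int p * (l div int p)) = (w powi (int p)) powi (l div int p)"
    by (simp add: power_int_mult)
  also have "w powi (int p) = 1" using assms(1) by simp
  also have "w powi (l mod int p) = w ^ (nat (l mod int p))"
    using assms(2) by (simp add: power_int_def)
  finally show ?thesis by simp
qed

lemma geom_zero: assumes "(w::complex) ^ p = 1" "w \<noteq> 1" shows "(\<Sum>u<p. w^u) = 0"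
  using assms by (simp add: geometric_sum)



lemma prod_split_nat: "(\<Prod>j<a+b. F j) = (\<Prod>j<a. F j) * (\<Prod>j<b. F (a+j))"
  for F :: "nat \<Rightarrow> 'a::comm_monoid_mult"
  by (induction b) (simp_all add: mult.assoc)

lemma sum_periodic_shift:
  fixes F :: "nat \<Rightarrow> 'a::comm_ring"
  assumes "\<And>t. F (t + q) = F t"
  shows "(\<Sum>t<q. F (c + t)) = (\<Sum>t<q. F t)"
proof (induction c)
  case (Suc c)
  have "(\<Sum>t<Suc q. F (c + t)) = F (c + 0) + (\<Sum>t<q. F (c + Suc t))"
    by (subst sum.lessThan_Suc_shift) simp
  moreover have "(\<Sum>t<Suc q. F (c + t)) = (\<Sum>t<q. F (c + t)) + F (c + q)" by simp
  moreover have "F (c + q) = F c" using assms by simp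
  ultimately have "(\<Sum>t<q. F (c + Suc t)) = (\<Sum>t<q. F (c + t))"
    by (simp add: algebra_simps)
  then show ?case using Suc by simp
qed simp

lemma sum_block:
  fixes F :: "nat \<Rightarrow> 'a::comm_ring"
  assumes "\<And>t. F (t + n * f) = F t"
  shows "(\<Sum>j<n. \<Sum>a\<in>{1..f}. F (a * n + j)) = (\<Sum>t<n * f. F t)"
proof -
  have "(\<Sum>j<n. \<Sum>a\<in>{1..f}. F (a * n + j)) = (\<Sum>a\<in>{1..f}. \<Sum>j<n. F (a * n + j))"
    by (rule sum.swap)
  also have "\<dots> = (\<Sum>a<f. \<Sum>j<n. F (n + (a * n + j)))"
  proof -
    have "{1..f} = {Suc 0..<Suc f}" by auto
    then have "(\<Sum>a\<in>{1..f}. \<Sum>j<n. F (a * n + j)) = (\<Sum>a\<in>{0..<f}. \<Sum>j<n. F (Suc a * n + j))"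
      by (simp only: sum.atLeast_Suc_lessThan_Suc_shift comp_def)
    also have "\<dots> = (\<Sum>a<f. \<Sum>j<n. F (n + (a * n + j)))"
      by (simp add: atLeast0LessThan add.assoc)
    finally show ?thesis .
  qed
  also have "\<dots> = (\<Sum>a<f. \<Sum>t\<in>{a*n..<a*n+n}. F (n + t))"
  proof (rule sum.cong[OF refl])
    fix a
    show "(\<Sum>j<n. F (n + (a * n + j))) = (\<Sum>t\<in>{a*n..<a*n+n}. F (n + t))"
      using sum.shift_bounds_nat_ivl[of "\<lambda>t. F (n + t)" 0 "a*n" n]
      by (simp add: atLeast0LessThan algebra_simps)
  qed
  also have "\<dots> = (\<Sum>t<f*n. F (n + t))" by (rule sum.nat_group)
  also have "\<dots> = (\<Sum>t<n*f. F t)"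
    using sum_periodic_shift[of F "n*f" n] assms by (simp add: mult.commute)
  finally show ?thesis .
qed

lemma sum_alt_sign: "(\<Sum>b\<in>{1..2*e}. (-1::complex)^b) = 0"
  by (induction e) (simp_all add: algebra_simps)


lemma zeta_inj: assumes "p > 0" "u < p" "v < p" "zeta p ^ u = zeta p ^ v" shows "u = v"
  using assms complex_root_unity_eq[of p u v] by (simp add: zeta_pow)

lemma prod_zeta: assumes "p > 1" shows "(\<Prod>u\<in>{1..<p}. 1 - zeta p ^ u) = of_nat p"
proof -
  define P where "P = (\<Sum>i<p. Polynomial.monom (1::complex) i)"
  define Q where "Q = (\<Prod>u\<in>{1..<p}. [:- (zeta p ^ u), 1:])"
  define A where "A = (\<lambda>u. zeta p ^ u) ` {1..<p}"
  have inj: "inj_on (\<lambda>u. zeta p ^ u) {1..<p}"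
    unfolding inj_on_def using zeta_inj assms by auto
  have cardA: "card A = p - 1" unfolding A_def using card_image[OF inj] by simp
  have cP: "Polynomial.coeff P k = (if k < p then 1 else 0)" for k
    unfolding P_def coeff_sum by (simp add: coeff_monom)
  have degP: "degree P \<le> p - 1" by (rule degree_le) (use cP in auto)
  have degQ: "degree Q = p - 1"
    unfolding Q_def by (subst degree_prod_sum_eq) auto
  have lcQ: "Polynomial.coeff Q (p - 1) = 1"
    using lead_coeff_prod[of "\<lambda>u. [:- (zeta p ^ u), 1:]" "{1..<p}"] degQ unfolding Q_def by simp
  have cP1: "Polynomial.coeff P (p - 1) = 1" using cP assms by simp
  have ev: "poly P z = poly Q z" if "z \<in> A" for z
  proof -
    obtain u where u: "u \<in> {1..<p}" "z = zeta p ^ u" using \<open>z \<in> A\<close> unfolding A_def by auto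
    have "z ^ p = 1" using u zeta_p[of p] assms by (simp add: power_mult[symmetric] mult.commute power_mult)
    moreover have "z \<noteq> 1" using u zeta_pow_eq_1[of p u] assms by (auto dest: dvd_imp_le)
    ultimately have "poly P z = 0" unfolding P_def by (simp add: poly_sum poly_monom geom_zero)
    moreover have "poly Q z = 0" unfolding Q_def poly_prod using u by (auto intro!: prod_zero)
    ultimately show ?thesis by simp
  qed
  have "P = Q"
    by (rule poly_eqI_degree_lead_coeff[of P "p - 1" Q A]) (use cP1 lcQ cardA degP degQ ev in auto)
  hence "poly P 1 = poly Q 1" by simp
  moreover have "poly P 1 = of_nat p" unfolding P_def by (simp add: poly_sum poly_monom)
  moreover have "poly Q 1 = (\<Prod>u\<in>{1..<p}. 1 - zeta p ^ u)" unfolding Q_def poly_prod by simp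
  ultimately show ?thesis by simp
qed


locale orth =
  fixes n p r :: nat and lam :: int
  assumes n1: "n > 1" and nodd: "odd n" and pp: "prime p" and pn: "[p = 1] (mod n)"
    and prim: "residue_primroot p r" and lamc: "[lam * (int r - 1) = 1] (mod int p)"
begin

definition "q = p - 1"
definition "h = q div 2"
definition "f = q div n"
definition "e = f div 2"
definition "g t = zeta p ^ (r ^ t)"

lemma p2: "p > 2"
proof -
  have "p \<ge> 2" using pp prime_ge_2_nat by blast
  moreover have "n dvd p - 1" using pn cong_to_1_nat by blast
  moreover have "p \<noteq> 2" proof
    assume "p = 2" then have "n dvd 1" using \<open>n dvd p - 1\<close> by simp
    then show False using n1 by simp
  qed
  ultimately show ?thesis by linarith
qed

lemma p0: "p > 0" using p2 by simp

lemma podd: "odd p" using p2 pp prime_odd_nat by blast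

lemma q_nf: "q = n * f"
  using pn cong_to_1_nat unfolding q_def f_def by auto

lemma q_even: "even q" using podd p2 unfolding q_def by simp

lemma f_e: "f = 2 * e"
proof -
  have "even (n*f)" using q_even q_nf by simp
  hence "even f" using nodd by simp
  thus ?thesis unfolding e_def by simp
qed

lemma q_pos: "q > 0" using p2 unfolding q_def by simp

lemma e_pos: "e > 0" using q_pos q_nf f_e by (cases e) auto

lemma h_ne: "h = n * e" unfolding h_def using q_nf f_e by simp

lemma q_2h: "q = 2 * h" unfolding h_def using q_even by simp

lemma h_pos: "h > 0" using q_2h q_pos by simp

lemma cop: "coprime p r" using prim unfolding residue_primroot_def by simp

lemma ordr: "ord p r = q"
  using prim pp unfolding residue_primroot_def q_def by (simp add: totient_prime)

lemma rq: "[r ^ q = 1] (mod p)" using ord_divides[of r q p] ordr by simp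

lemma rh: "p dvd r ^ h + 1"
proof -
  have ne: "\<not> [r ^ h = 1] (mod p)" using ord_minimal[of h p r] ordr h_pos q_2h by simp
  have "[(r^h)^2 = 1] (mod p)" using rq q_2h by (simp add: power_mult[symmetric] mult.commute)
  hence "int p dvd int ((r^h)^2) - 1"
    by (metis cong_iff_dvd_diff cong_int_iff of_nat_1)
  hence "int p dvd (int (r^h) - 1) * (int (r^h) + 1)" by (simp add: power2_eq_square algebra_simps)
  hence "int p dvd int (r^h) - 1 \<or> int p dvd int (r^h) + 1"
    using pp by (simp add: prime_dvd_mult_iff)
  moreover have "\<not> int p dvd int (r^h) - 1"
    using ne by (metis cong_iff_dvd_diff cong_int_iff of_nat_1)
  ultimately have "int p dvd int (r^h + 1)" by (simp add: add.commute)
  thus ?thesis by (simp only: int_dvd_int_iff)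
qed

lemma dvd_iff_h: "p dvd r ^ D + 1 \<longleftrightarrow> [D = h] (mod q)"
proof -
  have "p dvd r ^ D + 1 \<longleftrightarrow> [r ^ D = r ^ h] (mod p)"
  proof -
    have "p dvd r ^ D + 1 \<longleftrightarrow> int p dvd int (r^D) + 1" by (metis int_dvd_int_iff of_nat_Suc of_nat_add of_nat_1)
    also have "\<dots> \<longleftrightarrow> int p dvd (int (r^D) + 1) - (int (r^h) + 1)"
    proof -
      have hB: "int p dvd int (r^h) + 1" using rh by (metis int_dvd_int_iff of_nat_add of_nat_1)
      show ?thesis using dvd_add_left_iff[OF hB, of "(int (r^D) + 1) - (int (r^h) + 1)"] by simp
    qed
    also have "\<dots> \<longleftrightarrow> [int (r^D) = int (r^h)] (mod int p)" by (simp add: cong_iff_dvd_diff)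
    finally show ?thesis by (simp only: cong_int_iff)
  qed
  also have "\<dots> \<longleftrightarrow> [D = h] (mod q)" using order_divides_expdiff[OF cop] ordr by simp
  finally show ?thesis .
qed


lemma zp: "zeta p ^ p = 1" using zeta_p p0 by simp

lemma zcong: "[a = b] (mod p) \<Longrightarrow> zeta p ^ a = zeta p ^ b" using zeta_cong p0 by simp

lemma g_per: "g (t + q) = g t"
proof -
  have "[r ^ t * r ^ q = r ^ t * 1] (mod p)" using rq by (intro cong_mult) auto
  hence "zeta p ^ (r ^ t * r ^ q) = zeta p ^ (r ^ t * 1)" by (rule zcong)
  thus ?thesis unfolding g_def by (simp add: power_add)
qed

lemma g_shift: "g (t + D) = g t ^ (r ^ D)"
  unfolding g_def by (simp add: power_add power_mult)

lemma g_p: "g t ^ p = 1"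
proof -
  have "g t ^ p = (zeta p ^ p) ^ (r ^ t)" unfolding g_def by (simp only: power_mult[symmetric] mult.commute)
  thus ?thesis using zp by simp
qed

lemma not_dvd_rpow: "\<not> p dvd r ^ t"
proof
  assume "p dvd r ^ t"
  then have "p dvd r" using pp prime_dvd_power by blast
  then have "is_unit p" using coprime_common_divisor[OF cop dvd_refl] by blast
  then show False using p2 by simp
qed

lemma g_ne1: "g t \<noteq> 1"
  unfolding g_def using zeta_pow_eq_1[OF p0] not_dvd_rpow by simp

lemma g_h: "g (t + h) * g t = 1"
proof -
  have A: "g (t + h) * g t = zeta p ^ (r ^ (t + h) + r ^ t)"
    unfolding g_def by (rule power_add[symmetric])
  have B: "r ^ (t + h) + r ^ t = r ^ t * (r ^ h + 1)" by (simp add: power_add algebra_simps)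
  have "p dvd r ^ t * (r ^ h + 1)" using rh by (rule dvd_mult)
  hence C: "zeta p ^ (r ^ t * (r ^ h + 1)) = 1" by (simp only: zeta_pow_eq_1[OF p0])
  show ?thesis using A B C by simp
qed

lemma g_powi: "g (Suc t) powi lam = g t powi lam * g t"
proof -
  let ?b = "g t"
  have b0: "?b \<noteq> 0" unfolding g_def by (simp add: zeta_nz)
  have "g (Suc t) = ?b ^ r" using g_shift[of t 1] by simp
  moreover have "?b powi (int r * lam) = (?b ^ r) powi lam" by (simp only: power_int_mult power_int_of_nat)
  ultimately have "g (Suc t) powi lam = ?b powi (int r * lam)" by simp
  also have "int r * lam = lam + lam * (int r - 1)" by (simp add: algebra_simps)
  also have "?b powi (lam + lam * (int r - 1)) = ?b powi lam * ?b powi (lam * (int r - 1))"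
    using b0 by (intro power_int_add) simp
  also have "?b powi (lam * (int r - 1)) = ?b ^ nat ((lam * (int r - 1)) mod int p)"
    using root_powi[OF g_p p0] by simp
  also have "(lam * (int r - 1)) mod int p = 1"
    using lamc p2 unfolding cong_def by simp
  finally show ?thesis by simp
qed

definition "W t = g t powi lam * (\<Prod>j<h. (1 - g (t + j)))"

lemma sigma_z_W: "sigma_z p r lam t = W t * (1 - g t)"
proof -
  have "{0..(p - 3) div 2} = {..<h}" unfolding h_def q_def using p2 podd
    by (auto elim!: oddE)
  thus ?thesis unfolding sigma_z_def z_expr_def W_def
    by (simp add: g_def power_mult[symmetric] power_add)
qed

lemma W_Suc: "W (Suc t) = - W t"
proof -
  let ?b = "g t"
  define P where "P = (\<Prod>j<h. (1 - g (t + j)))"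
  define P' where "P' = (\<Prod>j<h. (1 - g (Suc t + j)))"
  have "(\<Prod>j<Suc h. (1 - g (t + j))) = (1 - ?b) * P'"
    unfolding P'_def by (subst prod.lessThan_Suc_shift) simp
  moreover have "(\<Prod>j<Suc h. (1 - g (t + j))) = P * (1 - g (t + h))"
    unfolding P_def by simp
  ultimately have eq: "(1 - ?b) * P' = P * (1 - g (t + h))" by simp
  have "(1 - ?b) * (?b * P') = ?b * ((1 - ?b) * P')" by (simp add: algebra_simps)
  also have "\<dots> = ?b * (P * (1 - g (t + h)))" using eq by simp
  also have "\<dots> = P * (?b - g (t + h) * ?b)" by (simp add: algebra_simps)
  also have "\<dots> = - ((1 - ?b) * P)" using g_h[of t] by (simp add: algebra_simps)
  finally have "(1 - ?b) * (?b * P') = (1 - ?b) * (- P)" by simp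
  moreover have "1 - ?b \<noteq> 0" using g_ne1[of t] by simp
  ultimately have "?b * P' = - P" by (metis mult_left_cancel mult_minus_right)
  have "W (Suc t) = g t powi lam * (?b * P')" unfolding W_def P'_def g_powi by (simp only: mult.assoc)
  also have "\<dots> = - W t" unfolding W_def P_def[symmetric] using \<open>?b * P' = - P\<close> by simp
  finally show ?thesis .
qed

lemma W_alt: "W t = (-1)^t * W 0"
  by (induction t) (simp_all add: W_Suc)


lemma g_mod: "g t = zeta p ^ (r ^ t mod p)"
  unfolding g_def using root_pow_mod[OF zp] by simp

lemma bij_r: "bij_betw (\<lambda>i. r ^ i mod p) {..<q} {1..<p}"
proof -
  have "bij_betw (\<lambda>i. r ^ i mod p) {..<totient p} (totatives p)"
    using residue_primroot_is_generator[of p r] p2 prim by simp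
  moreover have "totient p = q" using pp unfolding q_def by (simp add: totient_prime)
  moreover have "totatives p = {1..<p}" using pp by (auto simp: totatives_prime)
  ultimately show ?thesis by simp
qed

lemma prod_g: "(\<Prod>t<q. 1 - g t) = of_nat p"
proof -
  have "(\<Prod>t<q. 1 - g t) = (\<Prod>t<q. 1 - zeta p ^ (r ^ t mod p))" by (simp add: g_mod)
  also have "\<dots> = (\<Prod>u\<in>{1..<p}. 1 - zeta p ^ u)"
    using prod.reindex_bij_betw[OF bij_r, of "\<lambda>u. 1 - zeta p ^ u"] by simp
  also have "\<dots> = of_nat p" using prod_zeta p2 by simp
  finally show ?thesis .
qed

lemma sum_g_pow: "(\<Sum>t<q. g t ^ c) = (if p dvd c then of_nat q else -1)"
proof -
  define w where "w = zeta p ^ c"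
  have wp: "w ^ p = 1" unfolding w_def
    by (metis power_mult mult.commute zp power_one)
  have "(\<Sum>t<q. g t ^ c) = (\<Sum>t<q. w ^ (r ^ t mod p))"
  proof (rule sum.cong[OF refl])
    fix t
    have "g t ^ c = w ^ (r ^ t)" unfolding g_def w_def by (simp only: power_mult[symmetric] mult.commute)
    also have "\<dots> = w ^ (r ^ t mod p)" by (rule root_pow_mod[OF wp])
    finally show "g t ^ c = w ^ (r ^ t mod p)" .
  qed
  also have "\<dots> = (\<Sum>u\<in>{1..<p}. w ^ u)"
    using sum.reindex_bij_betw[OF bij_r, of "\<lambda>u. w ^ u"] by simp
  also have "\<dots> = (\<Sum>u<p. w ^ u) - 1"
  proof -
    have "{..<p} = insert 0 {1..<p}" using p2 by auto
    then show ?thesis by simp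
  qed
  also have "\<dots> = (if p dvd c then of_nat q else -1)"
  proof (cases "p dvd c")
    case True
    then have "w = 1" unfolding w_def using zeta_pow_eq_1[OF p0] by simp
    then show ?thesis using True p2 unfolding q_def by (simp add: of_nat_diff)
  next
    case False
    then have "w \<noteq> 1" unfolding w_def using zeta_pow_eq_1[OF p0] by simp
    then show ?thesis using False geom_zero[OF wp] by simp
  qed
  finally show ?thesis .
qed

lemma W0_sq: "W 0 ^ 2 = (-1) ^ h * of_nat p"
proof -
  have "W 0 * W h = (g 0 powi lam * g h powi lam) * ((\<Prod>j<h. (1 - g j)) * (\<Prod>j<h. (1 - g (h + j))))"
    unfolding W_def by (simp add: algebra_simps)
  also have "g 0 powi lam * g h powi lam = (g h * g 0) powi lam"
    by (simp add: power_int_mult_distrib mult.commute)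
  also have "g h * g 0 = 1" using g_h[of 0] by simp
  also have "(\<Prod>j<h. (1 - g j)) * (\<Prod>j<h. (1 - g (h + j))) = (\<Prod>j<q. 1 - g j)"
    using prod_split_nat[of "\<lambda>j. 1 - g j" h h] q_2h by (simp add: mult_2)
  also have "\<dots> = of_nat p" by (rule prod_g)
  finally have "W 0 * W h = of_nat p" by simp
  moreover have "W h = (-1)^h * W 0" by (rule W_alt)
  ultimately have "(-1)^h * W 0 ^ 2 = of_nat p" by (simp add: power2_eq_square algebra_simps)
  hence "(-1)^h * ((-1)^h * W 0 ^ 2) = (-1)^h * of_nat p" by simp
  thus ?thesis by (simp add: power_add[symmetric] mult.assoc[symmetric] power_mult_distrib[symmetric])
qed


lemma cond_iff:
  assumes i: "i < n" and m: "m < n" and b: "b \<in> {1..f}"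
  shows "[b * n + m + q - i = h] (mod q) \<longleftrightarrow> (i = m \<and> b = e)"
proof
  assume "i = m \<and> b = e"
  then have "b * n + m + q - i = h + q" using h_ne by (simp add: mult.commute)
  then show "[b * n + m + q - i = h] (mod q)" by (simp add: cong_def)
next
  assume c: "[b * n + m + q - i = h] (mod q)"
  have b1: "1 \<le> b" and b2: "b \<le> 2 * e" using b f_e by auto
  have "n * 1 \<le> n * f" using f_e e_pos by (intro mult_le_mono2) simp
  hence "n \<le> q" using q_nf by simp
  hence iq: "i \<le> b * n + m + q" using i by simp
  have "[int (b * n + m + q - i) = int h] (mod int q)" using c by (simp only: cong_int_iff)
  hence d1: "int q dvd int (b * n + m + q - i) - int h" by (simp add: cong_iff_dvd_diff)
  have e1: "int (b * n + m + q - i) = int b * int n + int m + int q - int i"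
    using iq by (simp add: of_nat_diff)
  have e2: "int h = int e * int n" using h_ne by simp
  have "int (b * n + m + q - i) - int h = ((int b - int e) * int n + (int m - int i)) + int q"
    unfolding e1 e2 by (simp add: algebra_simps)
  with d1 have "int q dvd ((int b - int e) * int n + (int m - int i)) + int q" by simp
  hence d2: "int q dvd (int b - int e) * int n + (int m - int i)"
    using dvd_add_left_iff[OF dvd_refl[of "int q"]] by blast
  have qn: "int q = int (2 * e) * int n" using q_nf f_e by simp
  have "int n dvd int q" using qn by simp
  hence "int n dvd (int b - int e) * int n + (int m - int i)" using d2 by (rule dvd_trans)
  hence dn: "int n dvd int m - int i" by (simp add: dvd_add_right_iff)
  have mi: "int m - int i = 0"
  proof (rule ccontr)
    assume "int m - int i \<noteq> 0"
    then have "\<bar>int n\<bar> \<le> \<bar>int m - int i\<bar>" using dn dvd_imp_le_int by blast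
    then show False using i m by arith
  qed
  hence "int (2 * e) * int n dvd (int b - int e) * int n" using d2 qn by simp
  hence d3: "int (2 * e) dvd int b - int e" using n1 by simp
  have be: "int b - int e = 0"
  proof (rule ccontr)
    assume "int b - int e \<noteq> 0"
    then have "\<bar>int (2 * e)\<bar> \<le> \<bar>int b - int e\<bar>" using d3 dvd_imp_le_int by blast
    then show False using b1 b2 e_pos by arith
  qed
  show "i = m \<and> b = e" using mi be by simp
qed

abbreviation "S t \<equiv> sigma_z p r lam t"
abbreviation "X k \<equiv> sigma_x n p r lam k"

lemma S_eq: "S t = (-1)^t * W 0 * (1 - g t)"
  unfolding sigma_z_W W_alt[of t] by simp

lemma S_per: "S (t + q) = S t"
proof -
  have "(-1::complex)^(t + q) = (-1)^t" using q_even by (simp add: power_add)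
  thus ?thesis using S_eq[of "t + q"] S_eq[of t] g_per[of t] by simp
qed

lemma sum_1f: "(\<Sum>a\<in>{1..F}. G a) = (\<Sum>a<F. G (1 + a))" for G :: "nat \<Rightarrow> complex"
proof -
  have "{1..F} = {Suc 0..<Suc F}" by auto
  then have "(\<Sum>a\<in>{1..F}. G a) = (\<Sum>a\<in>{0..<F}. G (Suc a))"
    by (simp only: sum.atLeast_Suc_lessThan_Suc_shift comp_def)
  thus ?thesis by (simp add: atLeast0LessThan)
qed

lemma X_def': "X k = (\<Sum>a\<in>{1..f}. S (a * n + k))"
  unfolding sigma_x_def f_def q_def by simp

lemma X_shift: "X (k + n) = X k"
proof -
  define T where "T a = S (a * n + k)" for a
  have Tp: "T (a + f) = T a" for a
  proof -
    have "(a + f) * n + k = (a * n + k) + q" using q_nf by (simp add: algebra_simps)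
    hence "S ((a + f) * n + k) = S ((a * n + k) + q)" by (simp only:)
    also have "\<dots> = S (a * n + k)" by (rule S_per)
    finally show ?thesis unfolding T_def .
  qed
  have "X k = (\<Sum>a<f. T (1 + a))" unfolding X_def' T_def by (rule sum_1f)
  also have "\<dots> = (\<Sum>a<f. T a)" by (rule sum_periodic_shift) (rule Tp)
  finally have 1: "X k = (\<Sum>a<f. T a)" .
  have "X (k + n) = (\<Sum>a<f. T (2 + a))" unfolding X_def' T_def 
    by (subst sum_1f) (simp add: algebra_simps)
  also have "\<dots> = (\<Sum>a<f. T a)" by (rule sum_periodic_shift) (rule Tp)
  finally show ?thesis using 1 by simp
qed

lemma X_shift_mult: "X (k + a * n) = X k"
proof (induction a)
  case (Suc a)
  have "X (k + Suc a * n) = X ((k + a * n) + n)" by (simp add: algebra_simps)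
  also have "\<dots> = X (k + a * n)" by (rule X_shift)
  finally show ?case using Suc by simp
qed simp

lemma X_per: "X (k + q) = X k"
  using X_shift_mult[of k f] q_nf by (simp add: mult.commute)


lemma C_val: "(\<Sum>t<q. (1 - g t) * (1 - g (t + D))) = of_nat p * (if p dvd r ^ D + 1 then 2 else 1)"
proof -
  have ex0: "(1 - x) * (1 - x ^ k) = 1 - x ^ 1 - x ^ k + x ^ (k + 1)" for x :: complex and k
    by (simp add: algebra_simps)
  have ex: "(1 - g t) * (1 - g (t + D)) = 1 - g t ^ 1 - g t ^ (r ^ D) + g t ^ (r ^ D + 1)" for t
    unfolding g_shift[of t D] by (rule ex0)
  have "(\<Sum>t<q. (1 - g t) * (1 - g (t + D)))
      = (\<Sum>t<q. 1 - g t ^ 1 - g t ^ (r ^ D) + g t ^ (r ^ D + 1))" by (simp only: ex)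
  also have "\<dots> = of_nat q - (\<Sum>t<q. g t ^ 1) - (\<Sum>t<q. g t ^ (r ^ D)) + (\<Sum>t<q. g t ^ (r ^ D + 1))"
    by (simp add: sum.distrib sum_subtractf)
  also have "(\<Sum>t<q. g t ^ 1) = -1" using sum_g_pow[of 1] p2 by simp
  also have "(\<Sum>t<q. g t ^ (r ^ D)) = -1" using sum_g_pow[of "r ^ D"] not_dvd_rpow[of D] by simp
  also have "(\<Sum>t<q. g t ^ (r ^ D + 1)) = (if p dvd r ^ D + 1 then of_nat q else -1)" by (rule sum_g_pow)
  also have "of_nat q = (of_nat p - 1 :: complex)" using p2 unfolding q_def by (simp add: of_nat_diff)
  finally show ?thesis by simp
qed

lemma sign_lemma: "(-1::complex)^(i + t) * (-1)^(b * n + m + t) = (-1)^(i + m) * (-1)^b"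
proof -
  have "(-1::complex)^(i + t) * (-1)^(b * n + m + t) = (-1)^(i + t + (b * n + m + t))" by (simp add: power_add)
  also have "\<dots> = (-1)^(i + m + b)"
  proof -
    obtain k where k: "n = 2 * k + 1" using nodd oddE by blast
    have "i + t + (b * n + m + t) = (i + m + b) + 2 * (t + b * k)" unfolding k by (simp add: algebra_simps)
    thus ?thesis by (simp only: power_add power_mult) simp
  qed
  finally show ?thesis by (simp add: power_add)
qed

lemma inner:
  assumes "i \<le> q"
  shows "(\<Sum>t<q. S (i + t) * S (b * n + (m + t))) =
         W 0 ^ 2 * (-1)^(i + m) * (-1)^b * (of_nat p * (if p dvd r ^ (b * n + m + q - i) + 1 then 2 else 1))"
proof -
  define D where "D = b * n + m + q - i"
  define G where "G t = (1 - g t) * (1 - g (t + D))" for t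
  have Gp: "G (t + q) = G t" for t
  proof -
    have "g (t + q + D) = g (t + D)" using g_per[of "t + D"] by (simp add: algebra_simps)
    thus ?thesis unfolding G_def using g_per[of t] by simp
  qed
  have trm: "S (i + t) * S (b * n + (m + t)) = W 0 ^ 2 * ((-1)^(i + m) * (-1)^b) * G (i + t)" for t
  proof -
    have "b * n + (m + t) + q = (i + t) + D" unfolding D_def using assms by simp
    hence "g (b * n + (m + t)) = g ((i + t) + D)" using g_per[of "b * n + (m + t)"] by metis
    hence "S (i + t) * S (b * n + (m + t)) = ((-1)^(i + t) * (-1)^(b * n + m + t)) * W 0 ^ 2 * G (i + t)"
      unfolding S_eq G_def by (simp add: power2_eq_square algebra_simps)
    thus ?thesis unfolding sign_lemma by (simp add: algebra_simps)
  qed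
  have "(\<Sum>t<q. S (i + t) * S (b * n + (m + t))) = W 0 ^ 2 * ((-1)^(i + m) * (-1)^b) * (\<Sum>t<q. G (i + t))"
    by (simp add: trm sum_distrib_left)
  also have "(\<Sum>t<q. G (i + t)) = (\<Sum>t<q. G t)" by (rule sum_periodic_shift) (rule Gp)
  also have "\<dots> = of_nat p * (if p dvd r ^ D + 1 then 2 else 1)" unfolding G_def by (rule C_val)
  finally show ?thesis unfolding D_def by (simp add: algebra_simps)
qed


lemma main:
  assumes i: "i < n" and m: "m < n"
  shows "(\<Sum>j<n. X (i + j) * X (m + j)) = (if i = m then of_nat p ^ 2 else 0)"
proof -
  define F where "F t = S (i + t) * X (m + t)" for t
  have "n * 1 \<le> n * f" using f_e e_pos by (intro mult_le_mono2) simp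
  hence nq: "n \<le> q" using q_nf by simp
  have Fp: "F (t + n * f) = F t" for t
  proof -
    have "S (i + (t + n * f)) = S (i + t)" using S_per[of "i + t"] q_nf by (simp add: add.assoc)
    moreover have "X (m + (t + n * f)) = X (m + t)" using X_per[of "m + t"] q_nf by (simp add: add.assoc)
    ultimately show ?thesis unfolding F_def by simp
  qed
  have "(\<Sum>j<n. X (i + j) * X (m + j)) = (\<Sum>j<n. \<Sum>a\<in>{1..f}. F (a * n + j))"
  proof (rule sum.cong[OF refl])
    fix j
    have "X (i + j) * X (m + j) = (\<Sum>a\<in>{1..f}. S (a * n + (i + j)) * X (m + j))"
      unfolding X_def'[of "i + j"] by (simp add: sum_distrib_right)
    also have "\<dots> = (\<Sum>a\<in>{1..f}. F (a * n + j))"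
    proof (rule sum.cong[OF refl])
      fix a
      have "X (m + (a * n + j)) = X ((m + j) + a * n)" by (simp add: algebra_simps)
      also have "\<dots> = X (m + j)" by (rule X_shift_mult)
      finally have "X (m + (a * n + j)) = X (m + j)" .
      moreover have "S (i + (a * n + j)) = S (a * n + (i + j))" by (simp add: algebra_simps)
      ultimately show "S (a * n + (i + j)) * X (m + j) = F (a * n + j)" unfolding F_def by simp
    qed
    finally show "X (i + j) * X (m + j) = (\<Sum>a\<in>{1..f}. F (a * n + j))" .
  qed
  also have "\<dots> = (\<Sum>t<n * f. F t)" by (rule sum_block) (rule Fp)
  also have "\<dots> = (\<Sum>t<q. \<Sum>b\<in>{1..f}. S (i + t) * S (b * n + (m + t)))"
    unfolding F_def X_def' q_nf by (simp add: sum_distrib_left)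
  also have "\<dots> = (\<Sum>b\<in>{1..f}. \<Sum>t<q. S (i + t) * S (b * n + (m + t)))" by (rule sum.swap)
  also have "\<dots> = (\<Sum>b\<in>{1..f}. (W 0 ^ 2 * of_nat p * (-1)^(i + m)) *
                      ((-1)^b + (if i = m \<and> b = e then (-1)^b else 0)))"
  proof (rule sum.cong[OF refl])
    fix b assume b: "b \<in> {1..f}"
    have c: "p dvd r ^ (b * n + m + q - i) + 1 \<longleftrightarrow> (i = m \<and> b = e)"
      using dvd_iff_h cond_iff[OF i m b] by simp
    show "(\<Sum>t<q. S (i + t) * S (b * n + (m + t))) = (W 0 ^ 2 * of_nat p * (-1)^(i + m)) *
                      ((-1)^b + (if i = m \<and> b = e then (-1)^b else 0))"
      unfolding inner[of i b m, OF order.strict_implies_order[OF less_le_trans[OF i nq]]] c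
      by (simp add: algebra_simps)
  qed
  also have "\<dots> = (W 0 ^ 2 * of_nat p * (-1)^(i + m)) *
                   ((\<Sum>b\<in>{1..f}. (-1)^b) + (\<Sum>b\<in>{1..f}. (if i = m \<and> b = e then (-1)^b else 0)))"
    by (simp only: sum.distrib[symmetric] sum_distrib_left)
  also have "(\<Sum>b\<in>{1..f}. (-1::complex)^b) = 0" unfolding f_e by (rule sum_alt_sign)
  also have "(\<Sum>b\<in>{1..f}. (if i = m \<and> b = e then (-1::complex)^b else 0)) = (if i = m then (-1)^e else 0)"
  proof (cases "i = m")
    case True
    have "e \<in> {1..f}" using e_pos f_e by simp
    then show ?thesis using True by simp
  qed simp
  finally have R: "(\<Sum>j<n. X (i + j) * X (m + j)) =
     W 0 ^ 2 * of_nat p * (-1) ^ (i + m) * (if i = m then (-1) ^ e else 0)" by simp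
  show ?thesis
  proof (cases "i = m")
    case True
    have "(-1::complex) ^ h = (-1) ^ e"
    proof -
      obtain k where k: "n = 2 * k + 1" using nodd oddE by blast
      have "h = e + 2 * (k * e)" unfolding h_ne k by (simp add: algebra_simps)
      thus ?thesis by (simp only: power_add power_mult) simp
    qed
    hence "W 0 ^ 2 = (-1) ^ e * of_nat p" using W0_sq by simp
    moreover have "(-1::complex) ^ (i + i) = 1" by simp
    moreover have "(-1::complex) ^ e * (-1) ^ e = 1" by (simp add: power_add[symmetric])
    ultimately show ?thesis using R True by (simp add: power2_eq_square algebra_simps)
  next
    case False
    then show ?thesis using R by simp
  qed
qed

lemma Gmat_main:
  assumes "i < n" "k < n"
  shows "(\<Sum>j<n. Gmat n p r lam i j * Gmat n p r lam k j) = (if i = k then 1 else 0)"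
proof -
  have "(\<Sum>j<n. Gmat n p r lam i j * Gmat n p r lam k j) = (\<Sum>j<n. X (i + j) * X (k + j)) / of_nat p ^ 2"
    unfolding Gmat_def by (simp add: sum_divide_distrib power2_eq_square)
  also have "\<dots> = (if i = k then 1 else 0)" using main[OF assms] p0 by simp
  finally show ?thesis .
qed


end

theorem theorem1:
  fixes n p r :: nat and lam :: int
  assumes "n > 1" and "odd n" and "prime p" and "[p = 1] (mod n)"
    and "residue_primroot p r"
    and "[lam * (int r - 1) = 1] (mod int p)"
  shows "(\<forall>i<n. \<forall>k<n. (\<Sum>j<n. Gmat n p r lam i j * Gmat n p r lam k j) = (if i = k then 1 else 0))
       \<and> (\<forall>i<n. \<forall>k<n. (\<Sum>j<n. Gmat n p r lam j i * Gmat n p r lam j k) = (if i = k then 1 else 0))"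
proof -
  interpret orth n p r lam using assms by unfold_locales
  have symm: "Gmat n p r lam j i = Gmat n p r lam i j" for i j by (simp add: Gmat_def add.commute)
  have A: "\<forall>i<n. \<forall>k<n. (\<Sum>j<n. Gmat n p r lam i j * Gmat n p r lam k j) = (if i = k then 1 else 0)"
    using Gmat_main by blast
  moreover have "\<forall>i<n. \<forall>k<n. (\<Sum>j<n. Gmat n p r lam j i * Gmat n p r lam j k) = (if i = k then 1 else 0)"
    using A by (simp add: symm)
  ultimately show ?thesis by blast
qed

end
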